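(* Every uniform, non-singular, IC-pseudo injective right $R$-module is quasi-pseudo principally injective.
   Context: All rings are associative with identity and all modules are unitary right $R$-modules. A nonzero module $U$ is uniform if every nonzero submodule of $U$ is essential in $U$. For a module $M$, $Z(M)=\{x\in M: xI=0$ for some essential right ideal $I$ of $R\}$; $M$ is non-singular if $Z(M)=0$. A submodule $A$ of $M$ is closed if it has no proper essential extension inside $M$. For modules $M,N$, $N$ is IC-pseudo $M$-injective if for every submodule $A$ of $M$ that is isomorphic to a closed submodule of $M$, every $R$-monomorphism $A\to N$ extends to an $R$-homomorphism $M\to N$; $M$ is IC-pseudo injective if it is IC-pseudo $M$-injective. A submodule $N$ of $M$ is $M$-cyclic if $N\cong M/L$ for some submodule $L$ of $M$ (equivalently, $N$ is the image of an endomorphism of $M$). $M$ is quasi-pseudo principally injective if for every $M$-cyclic submodule $A$ of $M$, every $R$-monomorphism $A\to M$ extends to an $R$-endomorphism of $M$. *)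

theory Defs
  imports "HOL-Algebra.Ring"
begin

text \<open>Right modules over an arbitrary (not necessarily commutative) ring R.
  HOL-Algebra's module locale requires a commutative ring, so right modules are
  defined here directly.\<close>

record ('r, 'm) rmodule = "'m ring" +
  rsmult :: "'m \<Rightarrow> 'r \<Rightarrow> 'm"

locale right_module =
  R: ring R + M: abelian_group M
  for R :: "('r, 'a) ring_scheme" and M :: "('r, 'm, 'b) rmodule_scheme" +
  assumes rsmult_closed:
      "\<lbrakk> x \<in> carrier M; r \<in> carrier R \<rbrakk> \<Longrightarrow> rsmult M x r \<in> carrier M"
    and rsmult_add_left:
      "\<lbrakk> x \<in> carrier M; y \<in> carrier M; r \<in> carrier R \<rbrakk> \<Longrightarrow>
         rsmult M (x \<oplus>\<^bsub>M\<^esub> y) r = rsmult M x r \<oplus>\<^bsub>M\<^esub> rsmult M y r"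
    and rsmult_add_right:
      "\<lbrakk> x \<in> carrier M; r \<in> carrier R; s \<in> carrier R \<rbrakk> \<Longrightarrow>
         rsmult M x (r \<oplus>\<^bsub>R\<^esub> s) = rsmult M x r \<oplus>\<^bsub>M\<^esub> rsmult M x s"
    and rsmult_assoc:
      "\<lbrakk> x \<in> carrier M; r \<in> carrier R; s \<in> carrier R \<rbrakk> \<Longrightarrow>
         rsmult M x (r \<otimes>\<^bsub>R\<^esub> s) = rsmult M (rsmult M x r) s"
    and rsmult_one:
      "x \<in> carrier M \<Longrightarrow> rsmult M x \<one>\<^bsub>R\<^esub> = x"

definition submod :: "('r, 'a) ring_scheme \<Rightarrow> ('r, 'm, 'b) rmodule_scheme \<Rightarrow> 'm set \<Rightarrow> bool" where
  "submod R M N \<longleftrightarrow> N \<subseteq> carrier M \<and> \<zero>\<^bsub>M\<^esub> \<in> N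
     \<and> (\<forall>x\<in>N. \<forall>y\<in>N. x \<oplus>\<^bsub>M\<^esub> y \<in> N)
     \<and> (\<forall>x\<in>N. \<ominus>\<^bsub>M\<^esub> x \<in> N)
     \<and> (\<forall>x\<in>N. \<forall>r\<in>carrier R. rsmult M x r \<in> N)"

definition essential_in :: "('r, 'a) ring_scheme \<Rightarrow> ('r, 'm, 'b) rmodule_scheme \<Rightarrow> 'm set \<Rightarrow> 'm set \<Rightarrow> bool" where
  "essential_in R M A B \<longleftrightarrow> submod R M A \<and> submod R M B \<and> A \<subseteq> B
     \<and> (\<forall>C. submod R M C \<and> C \<subseteq> B \<and> C \<noteq> {\<zero>\<^bsub>M\<^esub>} \<longrightarrow> C \<inter> A \<noteq> {\<zero>\<^bsub>M\<^esub>})"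

definition uniform_mod :: "('r, 'a) ring_scheme \<Rightarrow> ('r, 'm, 'b) rmodule_scheme \<Rightarrow> bool" where
  "uniform_mod R M \<longleftrightarrow> carrier M \<noteq> {\<zero>\<^bsub>M\<^esub>}
     \<and> (\<forall>U. submod R M U \<and> U \<noteq> {\<zero>\<^bsub>M\<^esub>} \<longrightarrow> essential_in R M U (carrier M))"

definition right_ideal :: "'r set \<Rightarrow> ('r, 'a) ring_scheme \<Rightarrow> bool" where
  "right_ideal I R \<longleftrightarrow> I \<subseteq> carrier R \<and> \<zero>\<^bsub>R\<^esub> \<in> I
     \<and> (\<forall>x\<in>I. \<forall>y\<in>I. x \<oplus>\<^bsub>R\<^esub> y \<in> I)
     \<and> (\<forall>x\<in>I. \<ominus>\<^bsub>R\<^esub> x \<in> I)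
     \<and> (\<forall>x\<in>I. \<forall>r\<in>carrier R. x \<otimes>\<^bsub>R\<^esub> r \<in> I)"

definition essential_right_ideal :: "'r set \<Rightarrow> ('r, 'a) ring_scheme \<Rightarrow> bool" where
  "essential_right_ideal I R \<longleftrightarrow> right_ideal I R
     \<and> (\<forall>J. right_ideal J R \<and> J \<noteq> {\<zero>\<^bsub>R\<^esub>} \<longrightarrow> J \<inter> I \<noteq> {\<zero>\<^bsub>R\<^esub>})"

definition singular_sub :: "('r, 'a) ring_scheme \<Rightarrow> ('r, 'm, 'b) rmodule_scheme \<Rightarrow> 'm set" where
  "singular_sub R M = {x \<in> carrier M. \<exists>I. essential_right_ideal I R
                                         \<and> (\<forall>a\<in>I. rsmult M x a = \<zero>\<^bsub>M\<^esub>)}"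

definition nonsingular_mod :: "('r, 'a) ring_scheme \<Rightarrow> ('r, 'm, 'b) rmodule_scheme \<Rightarrow> bool" where
  "nonsingular_mod R M \<longleftrightarrow> singular_sub R M = {\<zero>\<^bsub>M\<^esub>}"

definition closed_sub :: "('r, 'a) ring_scheme \<Rightarrow> ('r, 'm, 'b) rmodule_scheme \<Rightarrow> 'm set \<Rightarrow> bool" where
  "closed_sub R M A \<longleftrightarrow> submod R M A
     \<and> (\<forall>B. submod R M B \<and> essential_in R M A B \<longrightarrow> B = A)"

text \<open>R-homomorphisms from a submodule A of M into M (only the values on A matter).\<close>
definition rhom :: "('r, 'a) ring_scheme \<Rightarrow> ('r, 'm, 'b) rmodule_scheme \<Rightarrow> 'm set \<Rightarrow> ('m \<Rightarrow> 'm) \<Rightarrow> bool" where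
  "rhom R M A f \<longleftrightarrow> (\<forall>x\<in>A. f x \<in> carrier M)
     \<and> (\<forall>x\<in>A. \<forall>y\<in>A. f (x \<oplus>\<^bsub>M\<^esub> y) = f x \<oplus>\<^bsub>M\<^esub> f y)
     \<and> (\<forall>x\<in>A. \<forall>r\<in>carrier R. f (rsmult M x r) = rsmult M (f x) r)"

definition rmono :: "('r, 'a) ring_scheme \<Rightarrow> ('r, 'm, 'b) rmodule_scheme \<Rightarrow> 'm set \<Rightarrow> ('m \<Rightarrow> 'm) \<Rightarrow> bool" where
  "rmono R M A f \<longleftrightarrow> rhom R M A f \<and> inj_on f A"

definition sub_iso :: "('r, 'a) ring_scheme \<Rightarrow> ('r, 'm, 'b) rmodule_scheme \<Rightarrow> 'm set \<Rightarrow> 'm set \<Rightarrow> bool" where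
  "sub_iso R M A C \<longleftrightarrow> (\<exists>h. rhom R M A h \<and> bij_betw h A C)"

definition extends_to_endo :: "('r, 'a) ring_scheme \<Rightarrow> ('r, 'm, 'b) rmodule_scheme \<Rightarrow> 'm set \<Rightarrow> ('m \<Rightarrow> 'm) \<Rightarrow> bool" where
  "extends_to_endo R M A f \<longleftrightarrow> (\<exists>g. rhom R M (carrier M) g \<and> (\<forall>x\<in>A. g x = f x))"

text \<open>IC-pseudo injective (= IC-pseudo M-injective for N = M).\<close>
definition IC_pseudo_injective :: "('r, 'a) ring_scheme \<Rightarrow> ('r, 'm, 'b) rmodule_scheme \<Rightarrow> bool" where
  "IC_pseudo_injective R M \<longleftrightarrow>
     (\<forall>A. submod R M A \<and> (\<exists>C. closed_sub R M C \<and> sub_iso R M A C) \<longrightarrow>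
        (\<forall>f. rmono R M A f \<longrightarrow> extends_to_endo R M A f))"

definition M_cyclic :: "('r, 'a) ring_scheme \<Rightarrow> ('r, 'm, 'b) rmodule_scheme \<Rightarrow> 'm set \<Rightarrow> bool" where
  "M_cyclic R M A \<longleftrightarrow> (\<exists>g. rhom R M (carrier M) g \<and> A = g ` carrier M)"

definition quasi_pseudo_principally_injective :: "('r, 'a) ring_scheme \<Rightarrow> ('r, 'm, 'b) rmodule_scheme \<Rightarrow> bool" where
  "quasi_pseudo_principally_injective R M \<longleftrightarrow>
     (\<forall>A. submod R M A \<and> M_cyclic R M A \<longrightarrow>
        (\<forall>f. rmono R M A f \<longrightarrow> extends_to_endo R M A f))"

end

theory Submission
  imports Defs
begin

context right_module
begin

lemma sm_zero_left: "r \<in> carrier R \<Longrightarrow> rsmult M \<zero>\<^bsub>M\<^esub> r = \<zero>\<^bsub>M\<^esub>"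
proof -
  assume r: "r \<in> carrier R"
  have c: "rsmult M \<zero>\<^bsub>M\<^esub> r \<in> carrier M" using r rsmult_closed by simp
  have "rsmult M (\<zero>\<^bsub>M\<^esub> \<oplus>\<^bsub>M\<^esub> \<zero>\<^bsub>M\<^esub>) r = rsmult M \<zero>\<^bsub>M\<^esub> r \<oplus>\<^bsub>M\<^esub> rsmult M \<zero>\<^bsub>M\<^esub> r"
    using r by (intro rsmult_add_left) auto
  hence "rsmult M \<zero>\<^bsub>M\<^esub> r \<oplus>\<^bsub>M\<^esub> rsmult M \<zero>\<^bsub>M\<^esub> r = rsmult M \<zero>\<^bsub>M\<^esub> r \<oplus>\<^bsub>M\<^esub> \<zero>\<^bsub>M\<^esub>"
    using c by simp
  thus ?thesis using c by (metis M.add.l_cancel_one M.add.Units_l_cancel M.add.Units_eq M.zero_closed M.r_zero)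
qed

lemma sm_zero_right: "x \<in> carrier M \<Longrightarrow> rsmult M x \<zero>\<^bsub>R\<^esub> = \<zero>\<^bsub>M\<^esub>"
proof -
  assume x: "x \<in> carrier M"
  have c: "rsmult M x \<zero>\<^bsub>R\<^esub> \<in> carrier M" using x rsmult_closed by simp
  have "rsmult M x (\<zero>\<^bsub>R\<^esub> \<oplus>\<^bsub>R\<^esub> \<zero>\<^bsub>R\<^esub>) = rsmult M x \<zero>\<^bsub>R\<^esub> \<oplus>\<^bsub>M\<^esub> rsmult M x \<zero>\<^bsub>R\<^esub>"
    using x by (intro rsmult_add_right) auto
  hence "rsmult M x \<zero>\<^bsub>R\<^esub> \<oplus>\<^bsub>M\<^esub> rsmult M x \<zero>\<^bsub>R\<^esub> = rsmult M x \<zero>\<^bsub>R\<^esub> \<oplus>\<^bsub>M\<^esub> \<zero>\<^bsub>M\<^esub>"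
    using c by simp
  thus ?thesis using c by (metis M.add.l_cancel_one M.add.Units_l_cancel M.add.Units_eq M.zero_closed M.r_zero)
qed

lemma sm_neg_right: "x \<in> carrier M \<Longrightarrow> r \<in> carrier R \<Longrightarrow>
   rsmult M x (\<ominus>\<^bsub>R\<^esub> r) = \<ominus>\<^bsub>M\<^esub> rsmult M x r"
proof -
  assume x: "x \<in> carrier M" and r: "r \<in> carrier R"
  have "rsmult M x (r \<oplus>\<^bsub>R\<^esub> \<ominus>\<^bsub>R\<^esub> r) = rsmult M x r \<oplus>\<^bsub>M\<^esub> rsmult M x (\<ominus>\<^bsub>R\<^esub> r)"
    using x r by (intro rsmult_add_right) auto
  hence "rsmult M x r \<oplus>\<^bsub>M\<^esub> rsmult M x (\<ominus>\<^bsub>R\<^esub> r) = \<zero>\<^bsub>M\<^esub>"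
    using x r sm_zero_right by (simp add: R.r_neg)
  thus ?thesis using x r rsmult_closed
    by (metis M.add.inv_equality M.a_comm R.a_inv_closed)
qed

lemma hom_zero: "submod R M A \<Longrightarrow> rhom R M A f \<Longrightarrow> f \<zero>\<^bsub>M\<^esub> = \<zero>\<^bsub>M\<^esub>"
proof -
  assume A: "submod R M A" and f: "rhom R M A f"
  have z: "\<zero>\<^bsub>M\<^esub> \<in> A" using A unfolding submod_def by auto
  have c: "f \<zero>\<^bsub>M\<^esub> \<in> carrier M" using f z unfolding rhom_def by blast
  have "f (\<zero>\<^bsub>M\<^esub> \<oplus>\<^bsub>M\<^esub> \<zero>\<^bsub>M\<^esub>) = f \<zero>\<^bsub>M\<^esub> \<oplus>\<^bsub>M\<^esub> f \<zero>\<^bsub>M\<^esub>" using f z unfolding rhom_def by blast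
  hence "f \<zero>\<^bsub>M\<^esub> \<oplus>\<^bsub>M\<^esub> f \<zero>\<^bsub>M\<^esub> = f \<zero>\<^bsub>M\<^esub> \<oplus>\<^bsub>M\<^esub> \<zero>\<^bsub>M\<^esub>" using c by simp
  thus ?thesis using c by (metis M.add.l_cancel_one M.add.Units_l_cancel M.add.Units_eq M.zero_closed M.r_zero)
qed

lemma hom_neg: "submod R M A \<Longrightarrow> rhom R M A f \<Longrightarrow> x \<in> A \<Longrightarrow> f (\<ominus>\<^bsub>M\<^esub> x) = \<ominus>\<^bsub>M\<^esub> f x"
proof -
  assume A: "submod R M A" and f: "rhom R M A f" and x: "x \<in> A"
  have nx: "\<ominus>\<^bsub>M\<^esub> x \<in> A" "x \<in> carrier M" using A x unfolding submod_def by auto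
  have c: "f x \<in> carrier M" "f (\<ominus>\<^bsub>M\<^esub> x) \<in> carrier M" using f x nx unfolding rhom_def by auto
  have "f (x \<oplus>\<^bsub>M\<^esub> \<ominus>\<^bsub>M\<^esub> x) = f x \<oplus>\<^bsub>M\<^esub> f (\<ominus>\<^bsub>M\<^esub> x)" using f x nx unfolding rhom_def by auto
  hence "f x \<oplus>\<^bsub>M\<^esub> f (\<ominus>\<^bsub>M\<^esub> x) = \<zero>\<^bsub>M\<^esub>" using hom_zero[OF A f] nx by (simp add: M.r_neg)
  thus ?thesis using c by (metis M.add.inv_equality M.a_comm)
qed

lemma carrier_submod: "submod R M (carrier M)"
  unfolding submod_def using rsmult_closed by auto

lemma carrier_closed: "closed_sub R M (carrier M)"
  unfolding closed_sub_def essential_in_def using carrier_submod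
  by (auto simp: submod_def)

lemma cyc_submod: "z \<in> carrier M \<Longrightarrow> submod R M {rsmult M z s |s. s \<in> carrier R}"
  unfolding submod_def
proof (intro conjI ballI)
  assume z: "z \<in> carrier M"
  show "{rsmult M z s |s. s \<in> carrier R} \<subseteq> carrier M" using z rsmult_closed by auto
  show "\<zero>\<^bsub>M\<^esub> \<in> {rsmult M z s |s. s \<in> carrier R}" using z sm_zero_right
    by (metis (mono_tags, lifting) R.zero_closed mem_Collect_eq)
  fix x assume x: "x \<in> {rsmult M z s |s. s \<in> carrier R}"
  then obtain s where s: "s \<in> carrier R" "x = rsmult M z s" by auto
  show "\<ominus>\<^bsub>M\<^esub> x \<in> {rsmult M z s |s. s \<in> carrier R}"
    using s z sm_neg_right[of z s] by (metis (mono_tags, lifting) R.a_inv_closed mem_Collect_eq)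
  { fix r assume r: "r \<in> carrier R"
    show "rsmult M x r \<in> {rsmult M z s |s. s \<in> carrier R}"
      using s r z rsmult_assoc[of z s r] by (metis (mono_tags, lifting) R.m_closed mem_Collect_eq) }
  { fix y assume "y \<in> {rsmult M z s |s. s \<in> carrier R}"
    then obtain t where t: "t \<in> carrier R" "y = rsmult M z t" by auto
    show "x \<oplus>\<^bsub>M\<^esub> y \<in> {rsmult M z s |s. s \<in> carrier R}"
      using s t z rsmult_add_right[of z s t] by (metis (mono_tags, lifting) R.a_closed mem_Collect_eq) }
qed

lemma ker_submod: "rhom R M (carrier M) g \<Longrightarrow> submod R M {z \<in> carrier M. g z = \<zero>\<^bsub>M\<^esub>}"
proof -
  assume g: "rhom R M (carrier M) g"
  note gz = hom_zero[OF carrier_submod g]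
  show ?thesis unfolding submod_def
  proof (intro conjI ballI)
    show "{z \<in> carrier M. g z = \<zero>\<^bsub>M\<^esub>} \<subseteq> carrier M" by auto
    show "\<zero>\<^bsub>M\<^esub> \<in> {z \<in> carrier M. g z = \<zero>\<^bsub>M\<^esub>}" using gz by auto
    fix x assume x: "x \<in> {z \<in> carrier M. g z = \<zero>\<^bsub>M\<^esub>}"
    show "\<ominus>\<^bsub>M\<^esub> x \<in> {z \<in> carrier M. g z = \<zero>\<^bsub>M\<^esub>}"
      using x hom_neg[OF carrier_submod g, of x] by auto
    { fix r assume r: "r \<in> carrier R"
      show "rsmult M x r \<in> {z \<in> carrier M. g z = \<zero>\<^bsub>M\<^esub>}"
        using x r g rsmult_closed sm_zero_left unfolding rhom_def by auto }
    { fix y assume "y \<in> {z \<in> carrier M. g z = \<zero>\<^bsub>M\<^esub>}"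
      then show "x \<oplus>\<^bsub>M\<^esub> y \<in> {z \<in> carrier M. g z = \<zero>\<^bsub>M\<^esub>}"
        using x g unfolding rhom_def by auto }
  qed
qed

lemma ker_trivial:
  assumes U: "uniform_mod R M" and N: "nonsingular_mod R M"
    and g: "rhom R M (carrier M) g" and y: "y \<in> carrier M" "g y \<noteq> \<zero>\<^bsub>M\<^esub>"
    and x: "x \<in> carrier M" "g x = \<zero>\<^bsub>M\<^esub>"
  shows "x = \<zero>\<^bsub>M\<^esub>"
proof (rule ccontr)
  assume xn: "x \<noteq> \<zero>\<^bsub>M\<^esub>"
  note gz = hom_zero[OF carrier_submod g]
  define K where "K = {z \<in> carrier M. g z = \<zero>\<^bsub>M\<^esub>}"
  have Ks: "submod R M K" unfolding K_def by (rule ker_submod[OF g])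
  have "K \<noteq> {\<zero>\<^bsub>M\<^esub>}" using x xn unfolding K_def by auto
  hence Ke: "essential_in R M K (carrier M)" using U Ks unfolding uniform_mod_def by auto
  define I where "I = {r \<in> carrier R. g (rsmult M y r) = \<zero>\<^bsub>M\<^esub>}"
  have gsm: "\<And>z r. z \<in> carrier M \<Longrightarrow> r \<in> carrier R \<Longrightarrow> g (rsmult M z r) = rsmult M (g z) r"
    using g unfolding rhom_def by auto
  have gadd: "\<And>z w. z \<in> carrier M \<Longrightarrow> w \<in> carrier M \<Longrightarrow> g (z \<oplus>\<^bsub>M\<^esub> w) = g z \<oplus>\<^bsub>M\<^esub> g w"
    using g unfolding rhom_def by auto
  have RI: "right_ideal I R" unfolding right_ideal_def
  proof (intro conjI ballI)
    show "I \<subseteq> carrier R" unfolding I_def by auto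
    show "\<zero>\<^bsub>R\<^esub> \<in> I" unfolding I_def using y sm_zero_right gz by auto
    fix a assume a: "a \<in> I"
    hence a': "a \<in> carrier R" "g (rsmult M y a) = \<zero>\<^bsub>M\<^esub>" unfolding I_def by auto
    show "\<ominus>\<^bsub>R\<^esub> a \<in> I" unfolding I_def
      using a' y sm_neg_right hom_neg[OF carrier_submod g] rsmult_closed by auto
    { fix r assume r: "r \<in> carrier R"
      show "a \<otimes>\<^bsub>R\<^esub> r \<in> I" unfolding I_def
        using a' r y rsmult_assoc gsm rsmult_closed sm_zero_left by auto }
    { fix b assume "b \<in> I"
      hence b': "b \<in> carrier R" "g (rsmult M y b) = \<zero>\<^bsub>M\<^esub>" unfolding I_def by auto
      show "a \<oplus>\<^bsub>R\<^esub> b \<in> I" unfolding I_def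
        using a' b' y rsmult_add_right gadd rsmult_closed by auto }
  qed
  have EI: "essential_right_ideal I R" unfolding essential_right_ideal_def
  proof (intro conjI allI impI RI)
    fix J assume J: "right_ideal J R \<and> J \<noteq> {\<zero>\<^bsub>R\<^esub>}"
    hence "\<zero>\<^bsub>R\<^esub> \<in> J" unfolding right_ideal_def by auto
    then obtain j where j: "j \<in> J" "j \<noteq> \<zero>\<^bsub>R\<^esub>" using J by blast
    have jR: "j \<in> carrier R" using j J unfolding right_ideal_def by auto
    show "J \<inter> I \<noteq> {\<zero>\<^bsub>R\<^esub>}"
    proof (cases "g (rsmult M y j) = \<zero>\<^bsub>M\<^esub>")
      case True
      hence "j \<in> J \<inter> I" using j jR unfolding I_def by auto
      thus ?thesis using j by auto
    next
      case False
      define z where "z = rsmult M y j"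
      have zc: "z \<in> carrier M" unfolding z_def using y jR rsmult_closed by auto
      have zn: "z \<noteq> \<zero>\<^bsub>M\<^esub>" using False gz unfolding z_def by auto
      define C where "C = {rsmult M z s |s. s \<in> carrier R}"
      have Cs: "submod R M C" unfolding C_def by (rule cyc_submod[OF zc])
      have "z \<in> C" unfolding C_def using zc rsmult_one by (metis (mono_tags, lifting) R.one_closed mem_Collect_eq)
      hence "C \<noteq> {\<zero>\<^bsub>M\<^esub>}" using zn by auto
      moreover have "C \<subseteq> carrier M" using Cs unfolding submod_def by auto
      ultimately have "C \<inter> K \<noteq> {\<zero>\<^bsub>M\<^esub>}" using Ke Cs unfolding essential_in_def by auto
      moreover have "\<zero>\<^bsub>M\<^esub> \<in> C \<inter> K" using Cs Ks unfolding submod_def by auto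
      ultimately obtain c where c: "c \<in> C" "c \<in> K" "c \<noteq> \<zero>\<^bsub>M\<^esub>" by blast
      then obtain s where s: "s \<in> carrier R" "c = rsmult M z s" unfolding C_def by auto
      have js: "j \<otimes>\<^bsub>R\<^esub> s \<in> J" using J j s unfolding right_ideal_def by auto
      have eq: "rsmult M y (j \<otimes>\<^bsub>R\<^esub> s) = c" using s y jR rsmult_assoc unfolding z_def by auto
      have "j \<otimes>\<^bsub>R\<^esub> s \<in> I" unfolding I_def using eq c(2) jR s unfolding K_def by auto
      moreover have "j \<otimes>\<^bsub>R\<^esub> s \<noteq> \<zero>\<^bsub>R\<^esub>" using eq c(3) sm_zero_right y by auto
      ultimately show ?thesis using js by auto
    qed
  qed
  have "g y \<in> singular_sub R M" unfolding singular_sub_def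
  proof (intro CollectI conjI exI)
    show "g y \<in> carrier M" using g y unfolding rhom_def by auto
    show "essential_right_ideal I R" by (rule EI)
    show "\<forall>a\<in>I. rsmult M (g y) a = \<zero>\<^bsub>M\<^esub>" unfolding I_def using gsm y by auto
  qed
  thus False using N y unfolding nonsingular_mod_def by auto
qed

end


theorem proposition2p11:
  fixes R :: "('r, 'a) ring_scheme" and M :: "('r, 'm, 'b) rmodule_scheme"
  assumes "right_module R M"
    and "uniform_mod R M"
    and "nonsingular_mod R M"
    and "IC_pseudo_injective R M"
  shows "quasi_pseudo_principally_injective R M"
  unfolding quasi_pseudo_principally_injective_def
proof (intro allI impI)
  interpret right_module R M by fact
  fix A f assume A: "submod R M A \<and> M_cyclic R M A" and f: "rmono R M A f"
  then obtain g where g: "rhom R M (carrier M) g" "A = g ` carrier M"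
    unfolding M_cyclic_def by auto
  have As: "submod R M A" using A by auto
  have fh: "rhom R M A f" using f unfolding rmono_def by auto
  note gz = hom_zero[OF carrier_submod g(1)]
  show "extends_to_endo R M A f"
  proof (cases "\<forall>y\<in>carrier M. g y = \<zero>\<^bsub>M\<^esub>")
    case True
    hence "A \<subseteq> {\<zero>\<^bsub>M\<^esub>}" using g by auto
    hence "\<forall>x\<in>A. f x = \<zero>\<^bsub>M\<^esub>" using hom_zero[OF As fh] by auto
    moreover have "rhom R M (carrier M) (\<lambda>_. \<zero>\<^bsub>M\<^esub>)"
      unfolding rhom_def using sm_zero_left by auto
    ultimately show ?thesis unfolding extends_to_endo_def by (intro exI[of _ "\<lambda>_. \<zero>\<^bsub>M\<^esub>"]) auto
  next
    case False
    then obtain y where y: "y \<in> carrier M" "g y \<noteq> \<zero>\<^bsub>M\<^esub>" by auto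
    have gc: "\<And>z. z \<in> carrier M \<Longrightarrow> g z \<in> carrier M" using g(1) unfolding rhom_def by auto
    have inj: "inj_on g (carrier M)"
    proof (rule inj_onI)
      fix u v assume u: "u \<in> carrier M" and v: "v \<in> carrier M" and e: "g u = g v"
      have "g (u \<oplus>\<^bsub>M\<^esub> \<ominus>\<^bsub>M\<^esub> v) = g u \<oplus>\<^bsub>M\<^esub> g (\<ominus>\<^bsub>M\<^esub> v)"
        using g(1) u v unfolding rhom_def by auto
      also have "\<dots> = \<zero>\<^bsub>M\<^esub>" using hom_neg[OF carrier_submod g(1) v] e gc v
        by (simp add: M.r_neg)
      finally have "u \<oplus>\<^bsub>M\<^esub> \<ominus>\<^bsub>M\<^esub> v = \<zero>\<^bsub>M\<^esub>"
        using ker_trivial[OF assms(2,3) g(1) y] u v by auto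
      thus "u = v" using u v by (metis M.add.inv_equality M.a_comm M.minus_minus M.a_inv_closed)
    qed
    define h where "h = inv_into (carrier M) g"
    have bij: "bij_betw g (carrier M) A" using inj g(2) by (simp add: bij_betw_def)
    have hb: "bij_betw h A (carrier M)" unfolding h_def by (rule bij_betw_inv_into[OF bij])
    have hg: "\<And>z. z \<in> carrier M \<Longrightarrow> h (g z) = z" unfolding h_def using inj by (simp add: inv_into_f_f)
    have hr: "rhom R M A h" unfolding rhom_def
    proof (intro conjI ballI)
      fix a assume a: "a \<in> A"
      then obtain u where u: "u \<in> carrier M" "a = g u" using g(2) by auto
      show "h a \<in> carrier M" using u hg by auto
      { fix b assume "b \<in> A"
        then obtain v where v: "v \<in> carrier M" "b = g v" using g(2) by auto
        have "a \<oplus>\<^bsub>M\<^esub> b = g (u \<oplus>\<^bsub>M\<^esub> v)" using g(1) u v unfolding rhom_def by auto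
        thus "h (a \<oplus>\<^bsub>M\<^esub> b) = h a \<oplus>\<^bsub>M\<^esub> h b" using hg u v by auto }
      { fix r assume r: "r \<in> carrier R"
        have "rsmult M a r = g (rsmult M u r)" using g(1) u r unfolding rhom_def by auto
        thus "h (rsmult M a r) = rsmult M (h a) r" using hg u r rsmult_closed by auto }
    qed
    have "sub_iso R M A (carrier M)" unfolding sub_iso_def using hr hb by auto
    hence "submod R M A \<and> (\<exists>C. closed_sub R M C \<and> sub_iso R M A C)"
      using As carrier_closed by auto
    thus ?thesis using assms(4) f unfolding IC_pseudo_injective_def by auto
  qed
qed

end
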